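(* Let $y_D$ be a real random variable with continuous cumulative distribution function $F$, let $\gamma\in[0.5,1)\cap\mathbb{Q}$ with irreducible fraction $\gamma=\frac{n_1}{n_2}$, and let $\epsilon\in(0,1)$, $\rho\in(0,1)$. Let $z_{\rho/2}$ denote the upper $\frac{\rho}{2}$-quantile of the standard Gaussian distribution. Set $$k=\left\lceil\left(\frac{z_{\rho/2}\sqrt{\gamma-\gamma^2}}{2\epsilon\sqrt{n_2}}+\sqrt{\left(\frac{z_{\rho/2}\sqrt{\gamma-\gamma^2}}{2\epsilon\sqrt{n_2}}\right)^2+\frac{2(\gamma-0.5)z_{\rho/2}^2}{3n_2\epsilon}+\frac{1+\gamma}{3n_2\epsilon}}\right)^2\right\rceil,\qquad N=kn_2,$$ let $y_{D,1},\dots,y_{D,N}$ be i.i.d. copies of $y_D$ with order statistics $y_{D,(1)}\le\dots\le y_{D,(N)}$, and let $\tilde J_D=y_{D,(N\gamma)}$. Assume the following confidence-interval hypothesis for $X\sim\mathrm{Beta}(N\gamma,N+1-N\gamma)$: $$\mathrm{prob}\{\gamma-\epsilon_l\le X\le \gamma+\epsilon_u\}\ge 1-\rho,$$ where $$\epsilon_u=\frac{\sqrt{\gamma-\gamma^2}}{\sqrt N}z_{\rho/2}+\frac{2(0.5-\gamma)z_{\rho/2}^2-1-\gamma}{3N},\qquad \epsilon_l=\frac{\sqrt{\gamma-\gamma^2}}{\sqrt N}z_{\rho/2}-\frac{2(0.5-\gamma)z_{\rho/2}^2-1-\gamma}{3N}.$$ Then $$\mathrm{prob}\{|F(\tilde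 J_D)-\gamma|\le\epsilon\}\ge 1-\rho .$$
   Context: For a finite sample $\{x_i\}_{i=1}^N$, the order statistics $x_{(1)}\le\dots\le x_{(N)}$ are the sample values sorted increasingly. The irreducible fraction of a rational $\gamma$ is $\gamma=n_1/n_2$ with $n_1,n_2$ coprime positive integers. Known fact that may be used: if $y_{D,(m)}$ is the $m$th order statistic of $N$ i.i.d. samples with continuous CDF $F$, then $F(y_{D,(m)})\sim\mathrm{Beta}(m,N+1-m)$. In the paper, the confidence-interval hypothesis on the Beta variable is taken from an asymptotic (normal-approximation) result valid up to terms of order $N^{-3/2}$; here it is stated as an explicit assumption. *)

theory Defs
  imports "HOL-Probability.Probability"
begin

definition std_normal_measure :: "real measure" where
  "std_normal_measure = density lborel (\<lambda>x. ennreal (std_normal_density x))"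

definition beta_density :: "real \<Rightarrow> real \<Rightarrow> real \<Rightarrow> real" where
  "beta_density a b x =
     (if 0 < x \<and> x < 1 then x powr (a - 1) * (1 - x) powr (b - 1) / Beta a b else 0)"

definition beta_measure :: "real \<Rightarrow> real \<Rightarrow> real measure" where
  "beta_measure a b = density lborel (\<lambda>x. ennreal (beta_density a b x))"

text \<open>m-th order statistic (1-based) of a finite sample given as a list.\<close>
definition order_stat :: "real list \<Rightarrow> nat \<Rightarrow> real" where
  "order_stat xs m = sort xs ! (m - 1)"

end

theory Submission
  imports Defs
begin

lemma quad_root:
  fixes A B t :: real
  assumes B: "B > 0" and t: "t \<ge> A + sqrt (A\<^sup>2 + B)"
  shows "t\<^sup>2 \<ge> 2*A*t + B" and "A + sqrt (A\<^sup>2 + B) > 0"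
proof -
  define s where "s = sqrt (A\<^sup>2 + B)"
  have nn: "0 \<le> A\<^sup>2 + B" using B zero_le_power2[of A] by linarith
  have s2: "s\<^sup>2 = A\<^sup>2 + B" using nn unfolding s_def by simp
  have s0: "s \<ge> 0" unfolding s_def using nn by simp
  have "\<bar>A\<bar>\<^sup>2 < s\<^sup>2" using s2 B by simp
  then have "s > \<bar>A\<bar>" using s0 by (rule power_less_imp_less_base)
  then show "A + sqrt (A\<^sup>2 + B) > 0" unfolding s_def[symmetric] by linarith
  have "(t - (A + s)) * (t - (A - s)) \<ge> 0"
    using t \<open>s > \<bar>A\<bar>\<close> unfolding s_def[symmetric] by (intro mult_nonneg_nonneg) auto
  then show "t\<^sup>2 \<ge> 2*A*t + B" using s2 by (simp add: algebra_simps power2_eq_square)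
qed

lemma p1: fixes t s k e z a :: real assumes "t>0" "s>0" "e>0" "t^2 = k"
  shows "a / (t * s) * z = 2 * (z * a / (2 * e * s)) * e * t / k"
  unfolding assms(4)[symmetric] using assms(1-3) by (simp add: field_simps power2_eq_square)

lemma p2: fixes k n e g z :: real assumes "k>0" "n>0" "e>0"
  shows "- (2 * (1/2 - g) * z\<^sup>2 - 1 - g) / (3 * (k*n)) = e * (2 * (g - 1/2) * z\<^sup>2 / (3 * n * e) + (1 + g) / (3 * n * e)) / k"
  using assms by (simp add: field_simps)

lemma emeasure_distr_any:
  assumes "emeasure (distr M borel (f::_\<Rightarrow>real)) I \<noteq> 0" "A \<in> sets borel"
  shows "emeasure (distr M borel f) A = emeasure M (f -` A \<inter> space M)"
proof -
  have ss: "sigma_sets (space borel) (sets (borel::real measure)) = sets borel"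
    by (rule sigma_algebra.sigma_sets_eq[OF sets.sigma_algebra_axioms])
  have e: "emeasure (distr M borel f) = (\<lambda>B. if B \<in> sigma_sets (space borel) (sets (borel::real measure)) \<and> measure_space (space borel) (sigma_sets (space borel) (sets (borel::real measure))) (\<lambda>A. emeasure M (f -` A \<inter> space M)) then emeasure M (f -` B \<inter> space M) else 0)"
    unfolding distr_def by (rule emeasure_measure_of_conv)
  from assms(1) have "measure_space (space borel) (sigma_sets (space borel) (sets (borel::real measure))) (\<lambda>A. emeasure M (f -` A \<inter> space M))"
    unfolding e by (auto split: if_splits)
  then show ?thesis using assms(2) unfolding e ss by simp
qed

theorem theorem2:
  fixes M :: "'a measure"
    and yD :: "'a \<Rightarrow> real"
    and Y :: "nat \<Rightarrow> 'a \<Rightarrow> real"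
    and F :: "real \<Rightarrow> real"
    and n1 n2 :: nat
    and \<gamma> \<epsilon> \<rho> z :: real
    and k N :: nat
  assumes M: "prob_space M"
    and yD_rv: "yD \<in> borel_measurable M"
    and F_cdf: "F = cdf (distr M borel yD)"
    and F_cont: "continuous_on UNIV F"
    and n_pos: "0 < n1" "0 < n2"
    and n_coprime: "coprime n1 n2"
    and gamma_def: "\<gamma> = real n1 / real n2"
    and gamma_range: "1/2 \<le> \<gamma>" "\<gamma> < 1"
    and eps_range: "0 < \<epsilon>" "\<epsilon> < 1"
    and rho_range: "0 < \<rho>" "\<rho> < 1"
    and z_quantile: "measure std_normal_measure {z<..} = \<rho> / 2"
    and k_def: "k = nat \<lceil>(z * sqrt (\<gamma> - \<gamma>\<^sup>2) / (2 * \<epsilon> * sqrt (real n2))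
                 + sqrt ((z * sqrt (\<gamma> - \<gamma>\<^sup>2) / (2 * \<epsilon> * sqrt (real n2)))\<^sup>2
                         + 2 * (\<gamma> - 1/2) * z\<^sup>2 / (3 * real n2 * \<epsilon>)
                         + (1 + \<gamma>) / (3 * real n2 * \<epsilon>)))\<^sup>2\<rceil>"
    and N_def: "N = k * n2"
    and Y_rv: "\<And>i. i < N \<Longrightarrow> Y i \<in> borel_measurable M"
    and Y_ident: "\<And>i. i < N \<Longrightarrow> distr M borel (Y i) = distr M borel yD"
    and Y_indep: "prob_space.indep_vars M (\<lambda>_. borel) Y {..<N}"
    and known_fact:
      "\<And>m. 1 \<le> m \<Longrightarrow> m \<le> N \<Longrightarrow>
         distr M borel (\<lambda>\<omega>. F (order_stat (map (\<lambda>i. Y i \<omega>) [0..<N]) m))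
           = beta_measure (real m) (real N + 1 - real m)"
    and beta_CI:
      "let \<epsilon>u = sqrt (\<gamma> - \<gamma>\<^sup>2) / sqrt (real N) * z
                  + (2 * (1/2 - \<gamma>) * z\<^sup>2 - 1 - \<gamma>) / (3 * real N);
           \<epsilon>l = sqrt (\<gamma> - \<gamma>\<^sup>2) / sqrt (real N) * z
                  - (2 * (1/2 - \<gamma>) * z\<^sup>2 - 1 - \<gamma>) / (3 * real N)
       in measure (beta_measure (real N * \<gamma>) (real N + 1 - real N * \<gamma>))
            {\<gamma> - \<epsilon>l .. \<gamma> + \<epsilon>u} \<ge> 1 - \<rho>"
  shows "measure M {\<omega> \<in> space M.
           \<bar>F (order_stat (map (\<lambda>i. Y i \<omega>) [0..<N]) (N * n1 div n2)) - \<gamma>\<bar> \<le> \<epsilon>}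
         \<ge> 1 - \<rho>"
proof -
  interpret P: prob_space M by (rule M)
  define a where "a = sqrt (\<gamma> - \<gamma>\<^sup>2)"
  define A where "A = z * a / (2 * \<epsilon> * sqrt (real n2))"
  define B where "B = 2 * (\<gamma> - 1/2) * z\<^sup>2 / (3 * real n2 * \<epsilon>) + (1 + \<gamma>) / (3 * real n2 * \<epsilon>)"
  have n2r: "real n2 > 0" using n_pos by simp
  have B1: "2 * (\<gamma> - 1/2) * z\<^sup>2 / (3 * real n2 * \<epsilon>) \<ge> 0"
    using gamma_range eps_range n2r by (intro divide_nonneg_pos) auto
  have B2: "(1 + \<gamma>) / (3 * real n2 * \<epsilon>) > 0"
    using gamma_range eps_range n2r by (intro divide_pos_pos) auto
  have Bpos: "B > 0" unfolding B_def using B1 B2 by linarith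
  define R where "R = A + sqrt (A\<^sup>2 + B)"
  have kR: "k = nat \<lceil>R\<^sup>2\<rceil>" unfolding k_def R_def A_def B_def a_def by (simp add: add.assoc)
  have Rpos: "R > 0" unfolding R_def by (rule quad_root(2)[OF Bpos order_refl])
  have kge: "real k \<ge> R\<^sup>2" unfolding kR by linarith
  have "real_of_int \<lceil>R\<^sup>2\<rceil> > 0" using Rpos le_of_int_ceiling[of "R\<^sup>2"]
    by (smt (verit) zero_less_power)
  then have "\<lceil>R\<^sup>2\<rceil> \<ge> 1" by simp
  then have k1: "k \<ge> 1" using kR by linarith
  define t where "t = sqrt (real k)"
  have t2: "t\<^sup>2 = real k" unfolding t_def by simp
  have tR: "t \<ge> R" unfolding t_def using kge Rpos real_le_rsqrt by blast
  have quad: "real k \<ge> 2*A*t + B" using quad_root(1)[OF Bpos tR[unfolded R_def]] t2 by simp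
  have tpos: "t > 0" using tR Rpos by linarith
  have NN: "real N = real k * real n2" using N_def by simp
  have sN: "sqrt (real N) = t * sqrt (real n2)" unfolding NN t_def by (simp add: real_sqrt_mult)
  define c where "c = 2 * (1/2 - \<gamma>) * z\<^sup>2 - 1 - \<gamma>"
  define el where "el = sqrt (\<gamma> - \<gamma>\<^sup>2) / sqrt (real N) * z - c / (3 * real N)"
  define eu where "eu = sqrt (\<gamma> - \<gamma>\<^sup>2) / sqrt (real N) * z + c / (3 * real N)"
  have c00: "0 \<le> (\<gamma> - 1/2) * z\<^sup>2" using gamma_range by simp
  have c01: "c = - (2 * ((\<gamma> - 1/2) * z\<^sup>2)) - 1 - \<gamma>" unfolding c_def by (simp add: algebra_simps)
  have c0: "c \<le> 0" using c00 c01 gamma_range by linarith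
  have kpos: "real k > 0" using k1 by simp
  have Npos: "real N > 0" using NN kpos n2r by simp
  have cN: "c / (3 * real N) \<le> 0" using c0 Npos by (simp add: divide_nonpos_pos)
  have eul: "eu \<le> el" unfolding eu_def el_def using cN by linarith
  have s2pos: "sqrt (real n2) > 0" using n2r by simp
  have part1: "sqrt (\<gamma> - \<gamma>\<^sup>2) / sqrt (real N) * z = 2 * A * \<epsilon> * t / real k"
    unfolding A_def a_def sN by (rule p1[OF tpos s2pos eps_range(1) t2])
  have part2: "- c / (3 * real N) = \<epsilon> * B / real k"
    unfolding B_def c_def NN by (rule p2[OF kpos n2r eps_range(1)])
  have "el = 2*A*\<epsilon>*t/real k + \<epsilon>*B/real k" unfolding el_def part1 using part2 by linarith
  also have "\<dots> = \<epsilon> * (2*A*t + B) / real k" using kpos by (simp add: field_simps)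
  also have "\<dots> \<le> \<epsilon> * real k / real k"
  proof (rule divide_right_mono)
    show "\<epsilon> * (2 * A * t + B) \<le> \<epsilon> * real k" using quad eps_range by (simp add: mult_left_mono)
  qed (use kpos in simp)
  also have "\<dots> = \<epsilon>" using kpos by simp
  finally have elle: "el \<le> \<epsilon>" .
  have n12: "n1 < n2" using gamma_def gamma_range(2) n2r by (simp add: divide_less_eq)
  have m: "N * n1 div n2 = k * n1" using N_def n_pos by simp
  have m1: "1 \<le> k * n1" using k1 n_pos by simp
  have mN: "k * n1 \<le> N" using N_def n12 by simp
  have rm: "real (k * n1) = real N * \<gamma>" using gamma_def NN n2r by (simp add: field_simps)
  define X where "X = (\<lambda>\<omega>. F (order_stat (map (\<lambda>i. Y i \<omega>) [0..<N]) (k * n1)))"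
  define D where "D = distr M borel X"
  have D: "D = beta_measure (real N * \<gamma>) (real N + 1 - real N * \<gamma>)"
  proof -
    have "distr M borel X = beta_measure (real (k*n1)) (real N + 1 - real (k*n1))"
      unfolding X_def by (rule known_fact[OF m1 mN])
    then show ?thesis by (simp only: D_def rm)
  qed
  define I where "I = {\<gamma> - el .. \<gamma> + eu}"
  define S where "S = {\<gamma> - \<epsilon> .. \<gamma> + \<epsilon>}"
  have CI: "1 - \<rho> \<le> measure D I"
    using beta_CI unfolding Let_def I_def el_def eu_def c_def D by blast
  have IS: "I \<subseteq> S" unfolding I_def S_def using eul elle by auto
  have ne: "emeasure D I \<noteq> 0"
  proof
    assume "emeasure D I = 0"
    then have "measure D I = 0" by (simp add: measure_def)
    then show False using CI rho_range by simp
  qed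
  have eqS: "emeasure D S = emeasure M (X -` S \<inter> space M)"
    unfolding D_def by (rule emeasure_distr_any[OF ne[unfolded D_def]]) (simp add: S_def)
  have set: "X -` S \<inter> space M = {\<omega> \<in> space M.
           \<bar>F (order_stat (map (\<lambda>i. Y i \<omega>) [0..<N]) (N * n1 div n2)) - \<gamma>\<bar> \<le> \<epsilon>}"
    unfolding S_def X_def m by (auto simp: abs_le_iff)
  have mono: "emeasure D I \<le> emeasure D S"
    by (rule emeasure_mono[OF IS]) (simp add: D_def S_def)
  obtain r where "emeasure M (X -` S \<inter> space M) = ennreal r" using P.emeasure_real by blast
  then have fin: "emeasure M (X -` S \<inter> space M) < top" by simp
  have "measure D I \<le> measure M (X -` S \<inter> space M)"
    unfolding measure_def using mono eqS fin by (intro enn2real_mono) auto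
  then show ?thesis using CI unfolding set by linarith
qed

end
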